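(* Assume Hypothesis (H), let $b=b_1+b_2$, $M=N-P$ be splittings as described, $J(x):=N-b_1(\cdot,x)$, $g(x):=a+Px+b_2(x,x)$, and let $(x_k)$ be generated by $x_{k+1}=J(x_k)^{-1}g(x_k)$ from some $x_0$ with $0\leq x_0\leq x_\ast$ and $F(x_0)\leq 0$. Fix $k\geq 0$, let $y_k$ be any vector with $x_k\leq y_k\leq x_{k+1}$ and $g_k$ any vector with $g(x_k)\leq g_k\leq g(x_{k+1})$. Then $J(y_k)$ is nonsingular and $x^{GS}_{k+1}:=J(y_k)^{-1}g_k$ satisfies $x_{k+1}\leq x^{GS}_{k+1}\leq x_\ast$.
   Context: Inequalities between vectors/matrices are componentwise. An M-matrix is a matrix $sI-P$ with $P\geq0$ entrywise and $s\geq\rho(P)$ ($\rho$ = spectral radius). Let $M\in\mathbb R^{n\times n}$ be a nonsingular M-matrix, $a\in\mathbb R^n$ with $a\geq 0$, and $b:\mathbb R^n\times\mathbb R^n\to\mathbb R^n$ a bilinear map (not necessarily symmetric) with $b(x,y)\geq 0$ whenever $x,y\geq 0$. A solution of $Mx=a+b(x,x)$ means a vector $x\geq 0$ satisfying it; a solution $x_\ast$ is minimal if $x_\ast\leq y$ for every solution $y$. $F(x):=Mx-a-b(x,x)$. For a bilinear map $c$ and $x\in\mathbb R^n$, $c(x,\cdot)$ and $c(\cdot,x)$ denote the $n\times n$ matrices of $y\mapsto c(x,y)$ and $y\mapsto c(y,x)$; $F'_x:=M-b(x,\cdot)-b(\cdot,x)$. Hypothesis (H): the equation has a minimal solution $x_\ast$,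 $x_\ast>0$ (all components strictly positive), and either $F'_{x_\ast}$ is nonsingular, or $F'_{x_\ast}$ is irreducible and $F'_x\neq F'_{x_\ast}$ for every $x$ with $0\leq x\leq x_\ast$, $x\neq x_\ast$. Splittings: $b=b_1+b_2$ with $b_1,b_2$ bilinear and $b_i(x,y)\geq0$ for $x,y\geq0$; $M=N-P$ with $N$ an M-matrix and $P\geq 0$. *)

theory Defs
  imports "HOL-Analysis.Analysis"
begin

definition cmat :: "real^'n^'n \<Rightarrow> complex^'n^'n" where
  "cmat A = (\<chi> i j. complex_of_real (A $ i $ j))"

definition spec_rad :: "real^'n^'n \<Rightarrow> real" where
  "spec_rad A = Max {cmod l | l. det (mat l - cmat A) = 0}"

definition M_matrix :: "real^'n^'n \<Rightarrow> bool" where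
  "M_matrix A \<longleftrightarrow> (\<exists>s P. 0 \<le> P \<and> spec_rad P \<le> s \<and> A = mat s - P)"

text \<open>Irreducible matrix: no simultaneous row/column permutation brings it into
  block upper triangular form, i.e. there is no nonempty proper index set I with
  A_ij = 0 for all i in I, j not in I.\<close>
definition irreducible_mat :: "real^'n^'n \<Rightarrow> bool" where
  "irreducible_mat A \<longleftrightarrow>
     \<not> (\<exists>I. I \<noteq> {} \<and> I \<noteq> UNIV \<and> (\<forall>i\<in>I. \<forall>j. j \<notin> I \<longrightarrow> A $ i $ j = 0))"

definition is_sol :: "real^'n^'n \<Rightarrow> real^'n \<Rightarrow> (real^'n \<Rightarrow> real^'n \<Rightarrow> real^'n) \<Rightarrow> real^'n \<Rightarrow> bool" where
  "is_sol M a b x \<longleftrightarrow> 0 \<le> x \<and> M *v x = a + b x x"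

definition is_min_sol :: "real^'n^'n \<Rightarrow> real^'n \<Rightarrow> (real^'n \<Rightarrow> real^'n \<Rightarrow> real^'n) \<Rightarrow> real^'n \<Rightarrow> bool" where
  "is_min_sol M a b x \<longleftrightarrow> is_sol M a b x \<and> (\<forall>y. is_sol M a b y \<longrightarrow> x \<le> y)"

definition Fmap :: "real^'n^'n \<Rightarrow> real^'n \<Rightarrow> (real^'n \<Rightarrow> real^'n \<Rightarrow> real^'n) \<Rightarrow> real^'n \<Rightarrow> real^'n" where
  "Fmap M a b x = M *v x - a - b x x"

definition Fderiv :: "real^'n^'n \<Rightarrow> (real^'n \<Rightarrow> real^'n \<Rightarrow> real^'n) \<Rightarrow> real^'n \<Rightarrow> real^'n^'n" where
  "Fderiv M b x = M - matrix (\<lambda>y. b x y) - matrix (\<lambda>y. b y x)"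

definition hypH :: "real^'n^'n \<Rightarrow> real^'n \<Rightarrow> (real^'n \<Rightarrow> real^'n \<Rightarrow> real^'n) \<Rightarrow> real^'n \<Rightarrow> bool" where
  "hypH M a b xs \<longleftrightarrow> is_min_sol M a b xs \<and> (\<forall>i. 0 < xs $ i) \<and>
     (invertible (Fderiv M b xs) \<or>
      (irreducible_mat (Fderiv M b xs) \<and>
       (\<forall>x. 0 \<le> x \<and> x \<le> xs \<and> x \<noteq> xs \<longrightarrow> Fderiv M b x \<noteq> Fderiv M b xs)))"

end

theory Submission imports Defs begin

lemma bil_matrix:
  fixes h :: "real^'n \<Rightarrow> real^'n \<Rightarrow> real^'m"
  assumes "bilinear h" shows "matrix (\<lambda>y. h y z) *v x = h x z"
proof -
  have "linear (\<lambda>y. h y z)" using assms by (simp add: bilinear_def)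
  from matrix_vector_mul(2)[OF this] show ?thesis by metis
qed

lemma bil_ent: "matrix (\<lambda>y. h y z) $ i $ j = h (axis j 1) z $ i"
  by (simp add: matrix_def)

lemma axis_nonneg: "0 \<le> (axis j (1::real) :: real^'n)"
  by (simp add: less_eq_vec_def axis_def)

lemma mv_nonneg:
  fixes P :: "real^'n^'m"
  assumes "0 \<le> P" "0 \<le> v" shows "0 \<le> P *v v"
  using assms by (auto simp: less_eq_vec_def matrix_vector_mult_def intro!: sum_nonneg)

lemma bil_mono:
  fixes h :: "real^'n \<Rightarrow> real^'n \<Rightarrow> real^'m"
  assumes b: "bilinear h" "\<And>u v. 0 \<le> u \<Longrightarrow> 0 \<le> v \<Longrightarrow> 0 \<le> h u v"
    and "0 \<le> u" "u \<le> u'" "0 \<le> v" "v \<le> v'"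
  shows "h u v \<le> h u' v'"
proof -
  have d1: "0 \<le> u' - u" "0 \<le> v' - v" using assms
    by (auto simp: less_eq_vec_def)
  have "0 \<le> v'" using assms(5,6) by (rule order_trans)
  note d1 = d1 this
  have e: "h u' v' - h u v = h (u' - u) v' + h u (v' - v)"
    using b(1) by (simp add: bilinear_lsub bilinear_rsub)
  have "0 \<le> h (u' - u) v'" "0 \<le> h u (v' - v)" using b(2) d1 assms(3) by auto
  then have "0 \<le> h u' v' - h u v" unfolding e by (auto simp: less_eq_vec_def)
  then show ?thesis by (auto simp: less_eq_vec_def)
qed

lemma Zmono:
  fixes A :: "real^'n^'n" and v z :: "real^'n"
  assumes Z: "\<And>i j. i \<noteq> j \<Longrightarrow> A$i$j \<le> 0"
    and vpos: "\<And>i. 0 < v$i" and Av: "0 \<le> A *v v"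
    and noI: "\<And>I. I \<noteq> {} \<Longrightarrow> (\<forall>i\<in>I. (A *v v)$i = 0) \<Longrightarrow> (\<forall>i\<in>I. \<forall>j. j \<notin> I \<longrightarrow> A$i$j = 0) \<Longrightarrow> False"
    and Az: "0 \<le> A *v z"
  shows "0 \<le> z"
proof (rule ccontr)
  assume "\<not> 0 \<le> z"
  then obtain i0 where i0: "z$i0 < 0" by (auto simp: less_eq_vec_def not_le)
  define r where "r = (\<lambda>i. z$i / v$i)"
  define m where "m = Min (range r)"
  have mle: "\<And>i. m \<le> r i" unfolding m_def by simp
  have "m \<in> range r" unfolding m_def by (rule Min_in) auto
  then obtain k where k: "r k = m" by auto
  have "r i0 < 0" unfolding r_def using i0 vpos[of i0] by (simp add: divide_neg_pos)
  then have mneg: "m < 0" using mle[of i0] by linarith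
  define I where "I = {i. r i = m}"
  have Ine: "I \<noteq> {}" using k I_def by auto
  have zj: "m * v$j \<le> z$j" for j
    using mle[of j] vpos[of j] unfolding r_def by (simp add: le_divide_eq)
  have key: "(A *v v)$i = 0 \<and> (\<forall>j. j \<notin> I \<longrightarrow> A$i$j = 0)" if iI: "i \<in> I" for i
  proof -
    have zi: "z$i = m * v$i" using iI vpos[of i] unfolding I_def r_def by (simp add: divide_eq_eq)
    have eq: "(A *v z)$i = (\<Sum>j\<in>UNIV. A$i$j * (z$j - m * v$j)) + m * (A *v v)$i"
      by (simp add: matrix_vector_mult_def algebra_simps sum.distrib sum_distrib_left sum_subtractf)
    have t: "A$i$j * (z$j - m * v$j) \<le> 0" for j
    proof (cases "j = i")
      case True then show ?thesis using zi by simp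
    next
      case False then show ?thesis using Z[of i j] zj[of j] by (simp add: mult_nonpos_nonneg)
    qed
    have S: "(\<Sum>j\<in>UNIV. A$i$j * (z$j - m * v$j)) \<le> 0" by (rule sum_nonpos) (use t in auto)
    have Avi: "0 \<le> (A *v v)$i" using Av by (simp add: less_eq_vec_def)
    have mA: "m * (A *v v)$i \<le> 0" using mneg Avi by (simp add: mult_nonpos_nonneg)
    have Azi: "0 \<le> (A *v z)$i" using Az by (simp add: less_eq_vec_def)
    have S0: "(\<Sum>j\<in>UNIV. A$i$j * (z$j - m * v$j)) = 0" and mA0: "m * (A *v v)$i = 0"
      using eq S mA Azi by linarith+
    have "(A *v v)$i = 0" using mA0 mneg by simp
    moreover have "A$i$j = 0" if jI: "j \<notin> I" for j
    proof -
      have "(\<Sum>j\<in>UNIV. - (A$i$j * (z$j - m * v$j))) = 0" using S0 by (simp add: sum_negf)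
      then have "\<forall>j\<in>UNIV. - (A$i$j * (z$j - m * v$j)) = 0"
        by (subst sum_nonneg_eq_0_iff[symmetric]) (use t in \<open>auto simp: neg_le_0_iff_le\<close>)
      then have 0: "A$i$j * (z$j - m * v$j) = 0" by simp
      have "r j \<noteq> m" using jI I_def by auto
      then have "m < r j" using mle[of j] by simp
      then have "m * v$j < z$j" using vpos[of j] unfolding r_def by (simp add: less_divide_eq)
      then show ?thesis using 0 by simp
    qed
    ultimately show ?thesis by blast
  qed
  show False using noI[OF Ine] key by blast
qed

lemma mono_inv:
  fixes A :: "real^'n^'n"
  assumes mono: "\<And>z. 0 \<le> A *v z \<Longrightarrow> 0 \<le> z"
  shows "invertible A"
proof -
  have "inj ((*v) A)"
  proof (rule injI)
    fix x y assume "A *v x = A *v y"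
    then have "A *v (x - y) = 0" "A *v (y - x) = 0" by (simp_all add: matrix_vector_mult_diff_distrib)
    then have "0 \<le> x - y" "0 \<le> y - x" by (metis mono order_refl)+
    then show "x = y" by (auto simp: less_eq_vec_def vec_eq_iff intro: order.antisym)
  qed
  then show ?thesis using matrix_left_invertible_injective invertible_left_inverse by blast
qed

lemma inv_props:
  fixes A :: "real^'n^'n"
  assumes "invertible A"
  shows "A ** matrix_inv A = mat 1" "matrix_inv A ** A = mat 1" "A *v (matrix_inv A *v y) = y"
proof -
  have "A ** matrix_inv A = mat 1 \<and> matrix_inv A ** A = mat 1"
    unfolding matrix_inv_def by (rule someI_ex) (use assms in \<open>simp add: invertible_def\<close>)
  then show "A ** matrix_inv A = mat 1" "matrix_inv A ** A = mat 1" by auto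
  then show "A *v (matrix_inv A *v y) = y" by (simp add: matrix_vector_mul_assoc)
qed

lemma ifmul: "(if c then 1 else 0) * (x::real) = (if c then x else 0)" by simp

lemma block_sing:
  fixes A :: "real^'n^'n"
  assumes cl: "\<forall>i\<in>I. \<forall>j. j \<notin> I \<longrightarrow> A$i$j = 0"
    and u0: "\<And>j. j \<notin> I \<Longrightarrow> u$j = 0" and un: "u \<noteq> 0"
    and Au: "\<And>i. i \<in> I \<Longrightarrow> (A *v u)$i = 0"
    and inv: "invertible A"
  shows False
proof -
  define C :: "real^'n^'n" where
    "C = (\<chi> i j. if i \<in> I then (if j \<in> I then A$i$j else 0) else (if i = j then 1 else 0))"
  have Cu: "C *v u = 0"
  proof -
    have "(C *v u)$i = 0" for i
    proof (cases "i \<in> I")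
      case True
      have "(C *v u)$i = (\<Sum>j\<in>UNIV. A$i$j * u$j)"
        unfolding C_def matrix_vector_mult_def using True u0
        by (auto intro!: sum.cong)
      also have "\<dots> = 0" using Au[OF True] by (simp add: matrix_vector_mult_def)
      finally show ?thesis .
    next
      case False
      have "(C *v u)$i = (\<Sum>j\<in>UNIV. (if i = j then u$j else 0))"
        unfolding C_def matrix_vector_mult_def using False
        by (auto simp: ifmul intro!: sum.cong)
      then show ?thesis using u0[OF False] by simp
    qed
    then show ?thesis by (simp add: vec_eq_iff)
  qed
  have ninj: "\<not> inj ((*v) C)"
  proof
    assume "inj ((*v) C)"
    then have "u = 0" using Cu by (metis injD matrix_vector_mult_0_right)
    then show False using un by simp
  qed
  have "surj ((*v) C)"
  proof -
    have "\<exists>w. e = C *v w" for e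
    proof -
      define w0 where "w0 = matrix_inv A *v e"
      have Aw0: "A *v w0 = e" using inv_props(3)[OF inv] w0_def by simp
      define w where "w = (\<chi> i. if i \<in> I then w0$i else e$i)"
      have "(C *v w)$i = e$i" for i
      proof (cases "i \<in> I")
        case True
        have "(C *v w)$i = (\<Sum>j\<in>UNIV. A$i$j * w0$j)"
          unfolding C_def matrix_vector_mult_def w_def using True cl
          by (auto intro!: sum.cong)
        also have "\<dots> = e$i" using Aw0 by (simp add: matrix_vector_mult_def vec_eq_iff)
        finally show ?thesis .
      next
        case False
        have "(C *v w)$i = (\<Sum>j\<in>UNIV. (if i = j then w$j else 0))"
          unfolding C_def matrix_vector_mult_def using False
          by (auto simp: ifmul intro!: sum.cong)
        then show ?thesis using False by (simp add: w_def)
      qed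
      then have "e = C *v w" by (simp add: vec_eq_iff)
      then show ?thesis by blast
    qed
    then show ?thesis by blast
  qed
  then have "\<exists>B. C ** B = mat 1" using matrix_right_invertible_surjective by blast
  then have "\<exists>B. B ** C = mat 1" using matrix_left_right_inverse by blast
  then have "inj ((*v) C)" using matrix_left_invertible_injective by blast
  then show False using ninj by simp
qed


lemma mono_le:
  fixes M :: "real^'n^'n"
  assumes mono: "\<And>v. 0 \<le> M *v v \<Longrightarrow> 0 \<le> v" and le: "M *v p \<le> M *v q"
  shows "p \<le> q"
proof -
  have "0 \<le> M *v (q - p)" using le by (simp add: matrix_vector_mult_diff_distrib less_eq_vec_def)
  then have "0 \<le> q - p" by (rule mono)
  then show ?thesis by (simp add: less_eq_vec_def)
qed

lemma supersol:
  fixes M :: "real^'n^'n" and a z :: "real^'n" and b :: "real^'n \<Rightarrow> real^'n \<Rightarrow> real^'n"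
  assumes mono: "\<And>v. 0 \<le> M *v v \<Longrightarrow> 0 \<le> v" and inv: "invertible M"
   and a: "0 \<le> a" and b: "bilinear b" "\<And>u v. 0 \<le> u \<Longrightarrow> 0 \<le> v \<Longrightarrow> 0 \<le> b u v"
   and z: "0 \<le> z" "a + b z z \<le> M *v z"
  shows "\<exists>w. is_sol M a b w \<and> w \<le> z"
proof -
  define w :: "nat \<Rightarrow> real^'n" where "w = rec_nat 0 (\<lambda>_ v. matrix_inv M *v (a + b v v))"
  have w0: "w 0 = 0" by (simp add: w_def)
  have Mw: "M *v w (Suc k) = a + b (w k) (w k)" for k
    by (simp add: w_def inv_props(3)[OF inv])
  have b00: "b 0 0 = 0" using b(1) by (simp add: bilinear_lzero)
  have ind: "0 \<le> w k \<and> w k \<le> w (Suc k) \<and> w (Suc k) \<le> z" for k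
  proof (induction k)
    case 0
    have "M *v w 0 \<le> M *v w (Suc 0)" using Mw[of 0] w0 b00 a by simp
    then have 1: "w 0 \<le> w (Suc 0)" using mono_le[OF mono] by blast
    have "b 0 0 \<le> b z z" using b(2) z(1) by (simp add: b00)
    then have "M *v w (Suc 0) \<le> M *v z"
    proof (unfold less_eq_vec_def, intro allI)
      fix i
      assume bb: "\<forall>i. b 0 0 $ i \<le> b z z $ i"
      have "a$i + b z z $i \<le> (M *v z)$i" using z(2) by (simp add: less_eq_vec_def)
      moreover have "(M *v w (Suc 0))$i = a$i + b 0 0 $i" using Mw[of 0] w0 by simp
      ultimately show "(M *v w (Suc 0))$i \<le> (M *v z)$i" using bb[rule_format, of i] by linarith
    qed
    then have "w (Suc 0) \<le> z" using mono_le[OF mono] by blast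
    then show ?case using 1 w0 by simp
  next
    case (Suc k)
    then have h: "0 \<le> w k" "w k \<le> w (Suc k)" "w (Suc k) \<le> z" by auto
    have 0: "0 \<le> w (Suc k)" using h order_trans by blast
    have "b (w k) (w k) \<le> b (w (Suc k)) (w (Suc k))" by (rule bil_mono[OF b h(1) h(2) h(1) h(2)])
    then have "M *v w (Suc k) \<le> M *v w (Suc (Suc k))" unfolding Mw
      by (auto simp: less_eq_vec_def)
    then have 1: "w (Suc k) \<le> w (Suc (Suc k))" using mono_le[OF mono] by blast
    have "b (w (Suc k)) (w (Suc k)) \<le> b z z" by (rule bil_mono[OF b 0 h(3) 0 h(3)])
    then have "M *v w (Suc (Suc k)) \<le> M *v z"
    proof (unfold less_eq_vec_def, intro allI)
      fix i
      assume bb: "\<forall>i. b (w (Suc k)) (w (Suc k)) $ i \<le> b z z $ i"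
      have "a$i + b z z $i \<le> (M *v z)$i" using z(2) by (simp add: less_eq_vec_def)
      moreover have "(M *v w (Suc (Suc k)))$i = a$i + b (w (Suc k)) (w (Suc k)) $i" using Mw by simp
      ultimately show "(M *v w (Suc (Suc k)))$i \<le> (M *v z)$i" using bb[rule_format, of i] by linarith
    qed
    then have "w (Suc (Suc k)) \<le> z" using mono_le[OF mono] by blast
    then show ?case using 0 1 by simp
  qed
  define W where "W = (\<chi> i. SUP k. w k $ i)"
  have comp: "(\<lambda>k. w k $ i) \<longlonglongrightarrow> W $ i" for i
  proof -
    have "incseq (\<lambda>k. w k $ i)"
      by (rule incseq_SucI) (use ind in \<open>auto simp: less_eq_vec_def\<close>)
    moreover have "bdd_above (range (\<lambda>k. w k $ i))"
    proof (rule bdd_aboveI)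
      fix x assume "x \<in> range (\<lambda>k. w k $ i)"
      then obtain k where "x = w k $ i" by auto
      moreover have "w k \<le> z" using ind[of k] order_trans by blast
      ultimately show "x \<le> z $ i" by (simp add: less_eq_vec_def)
    qed
    ultimately have "(\<lambda>k. w k $ i) \<longlonglongrightarrow> (SUP k. w k $ i)" using LIMSEQ_incseq_SUP by blast
    then show ?thesis by (simp add: W_def)
  qed
  have lim: "w \<longlonglongrightarrow> W" by (rule vec_tendstoI) (rule comp)
  have limS: "(\<lambda>k. w (Suc k)) \<longlonglongrightarrow> W" using lim by (rule LIMSEQ_Suc)
  have W0: "0 \<le> W"
    unfolding less_eq_vec_def
  proof
    fix i show "0 $ i \<le> W $ i"
      by (rule LIMSEQ_le_const[OF comp]) (use ind in \<open>auto simp: less_eq_vec_def\<close>)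
  qed
  have Wz: "W \<le> z"
    unfolding less_eq_vec_def
  proof
    fix i
    have "w k $ i \<le> z $ i" for k using ind[of k] order_trans by (metis less_eq_vec_def)
    then show "W $ i \<le> z $ i"
      by (intro LIMSEQ_le_const2[OF comp]) auto
  qed
  have l1: "(\<lambda>k. M *v w (Suc k)) \<longlonglongrightarrow> M *v W"
    by (rule bounded_linear.tendsto[OF matrix_vector_mul_bounded_linear limS])
  have bb: "bounded_bilinear b" using b(1) bilinear_conv_bounded_bilinear by blast
  have l2: "(\<lambda>k. a + b (w k) (w k)) \<longlonglongrightarrow> a + b W W"
    by (intro tendsto_add tendsto_const bounded_bilinear.tendsto[OF bb] lim)
  have "M *v W = a + b W W" using l1 l2 unfolding Mw by (rule LIMSEQ_unique)
  then show ?thesis using W0 Wz by (auto simp: is_sol_def)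
qed


theorem mainTheorem11:
  fixes M N P :: "real^'n^'n" and a :: "real^'n"
    and b b1 b2 :: "real^'n \<Rightarrow> real^'n \<Rightarrow> real^'n"
    and xs :: "real^'n" and x :: "nat \<Rightarrow> real^'n"
    and k :: nat and yk gk :: "real^'n"
    and J :: "real^'n \<Rightarrow> real^'n^'n" and g :: "real^'n \<Rightarrow> real^'n"
  assumes M: "M_matrix M" "invertible M"
    and a: "0 \<le> a"
    and b: "bilinear b" "\<And>u v. 0 \<le> u \<Longrightarrow> 0 \<le> v \<Longrightarrow> 0 \<le> b u v"
    and H: "hypH M a b xs"
    and b1: "bilinear b1" "\<And>u v. 0 \<le> u \<Longrightarrow> 0 \<le> v \<Longrightarrow> 0 \<le> b1 u v"
    and b2: "bilinear b2" "\<And>u v. 0 \<le> u \<Longrightarrow> 0 \<le> v \<Longrightarrow> 0 \<le> b2 u v"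
    and bsplit: "\<And>u v. b u v = b1 u v + b2 u v"
    and N: "M_matrix N"
    and P: "0 \<le> P"
    and Msplit: "M = N - P"
    and J_def: "\<And>z. J z = N - matrix (\<lambda>y. b1 y z)"
    and g_def: "\<And>z. g z = a + P *v z + b2 z z"
    and x0: "0 \<le> x 0" "x 0 \<le> xs" "Fmap M a b (x 0) \<le> 0"
    and iter: "\<And>j. x (Suc j) = matrix_inv (J (x j)) *v g (x j)"
    and yk: "x k \<le> yk" "yk \<le> x (Suc k)"
    and gk: "g (x k) \<le> gk" "gk \<le> g (x (Suc k))"
  shows "invertible (J yk) \<and>
         x (Suc k) \<le> matrix_inv (J yk) *v gk \<and> matrix_inv (J yk) *v gk \<le> xs"
proof -
  have Nsp: "\<And>v. M *v v = N *v v - P *v v" using Msplit by (simp add: matrix_vector_mult_diff_rdistrib)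
  from N obtain sN QN where QN: "0 \<le> QN" "N = mat sN - QN" unfolding M_matrix_def by blast
  have NZ: "\<And>i j. i \<noteq> j \<Longrightarrow> N$i$j \<le> 0" using QN by (auto simp: mat_def less_eq_vec_def)
  from M(1) obtain sM QM where QM: "0 \<le> QM" "M = mat sM - QM" unfolding M_matrix_def by blast
  have MZ: "\<And>i j. i \<noteq> j \<Longrightarrow> M$i$j \<le> 0" using QM by (auto simp: mat_def less_eq_vec_def)
  have xs: "0 \<le> xs" "M *v xs = a + b xs xs" "\<And>y. is_sol M a b y \<Longrightarrow> xs \<le> y" "\<And>i. 0 < xs$i"
    using H by (auto simp: hypH_def is_min_sol_def is_sol_def)
  have Jv: "\<And>z v. J z *v v = N *v v - b1 v z"
    using J_def bil_matrix[OF b1(1)] by (simp add: matrix_vector_mult_diff_rdistrib)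
  have Jent: "\<And>z i j. J z $i$j = N$i$j - b1 (axis j 1) z $ i" by (simp add: J_def bil_ent)
  have b1e: "0 \<le> b1 (axis j 1) z $ i" if "0 \<le> z" for z i j
    using b1(2)[OF axis_nonneg that] by (simp add: less_eq_vec_def)
  have JZ: "\<And>z i j. 0 \<le> z \<Longrightarrow> i \<noteq> j \<Longrightarrow> J z $i$j \<le> 0"
    using Jent NZ b1e by (smt (verit))
  have Nxs: "N *v xs = a + P *v xs + b1 xs xs + b2 xs xs"
  proof -
    have "N *v xs - P *v xs = a + b1 xs xs + b2 xs xs" using xs(2) Nsp bsplit by (simp add: add.assoc)
    then show ?thesis by (simp add: diff_eq_eq add_ac)
  qed
  have JJ: "\<And>y y' v. J y *v v = J y' *v v - b1 v (y - y')"
    using Jv b1(1) by (simp add: bilinear_rsub)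
  have bxx: "0 \<le> b xs xs" using b(2)[OF xs(1) xs(1)] .

  have Mmono: "0 \<le> v" if Mv: "0 \<le> M *v v" for v
  proof (rule Zmono[where v = xs and A = M])
    show "\<And>i j. i \<noteq> j \<Longrightarrow> M$i$j \<le> 0" by (rule MZ)
    show "\<And>i. 0 < xs$i" by (rule xs(4))
    show "0 \<le> M *v xs" using xs(2) a bxx by (auto simp: less_eq_vec_def)
    show "0 \<le> M *v v" by (rule Mv)
    fix I assume Ine: "I \<noteq> {}" and z: "\<forall>i\<in>I. (M *v xs)$i = 0"
      and cl: "\<forall>i\<in>I. \<forall>j. j \<notin> I \<longrightarrow> M$i$j = 0"
    define u where "u = (\<chi> j. if j \<in> I then xs$j else 0)"
    show False
    proof (rule block_sing[where A = M and I = I and u = u])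
      show "\<forall>i\<in>I. \<forall>j. j \<notin> I \<longrightarrow> M$i$j = 0" by (rule cl)
      show "\<And>j. j \<notin> I \<Longrightarrow> u$j = 0" by (simp add: u_def)
      from Ine obtain i where "i \<in> I" by auto
      then have "u$i \<noteq> 0" using xs(4)[of i] by (simp add: u_def)
      then show "u \<noteq> 0" by auto
      show "invertible M" by (rule M(2))
      fix i assume iI: "i \<in> I"
      have "(M *v u)$i = (M *v xs)$i" unfolding matrix_vector_mult_def u_def using iI cl
        by (auto intro!: sum.cong)
      then show "(M *v u)$i = 0" using z iI by simp
    qed
  qed

  have gxs: "J xs *v xs = a + P *v xs + b2 xs xs" unfolding Jv Nxs by (simp add: algebra_simps)
  have Pxs: "0 \<le> P *v xs" by (rule mv_nonneg[OF P xs(1)])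
  have b2xs: "0 \<le> b2 xs xs" using b2(2)[OF xs(1) xs(1)] .
  have Jxmono: "0 \<le> v" if Jxv: "0 \<le> J xs *v v" for v
  proof (rule Zmono[where v = xs and A = "J xs"])
    show "\<And>i j. i \<noteq> j \<Longrightarrow> J xs$i$j \<le> 0" using JZ[OF xs(1)] by blast
    show "\<And>i. 0 < xs$i" by (rule xs(4))
    show "0 \<le> J xs *v xs" unfolding gxs using a Pxs b2xs by (auto simp: less_eq_vec_def)
    show "0 \<le> J xs *v v" by (rule Jxv)
    fix I assume Ine: "I \<noteq> {}" and z: "\<forall>i\<in>I. (J xs *v xs)$i = 0"
      and cl: "\<forall>i\<in>I. \<forall>j. j \<notin> I \<longrightarrow> J xs$i$j = 0"
    have aI: "a$i = 0 \<and> (P *v xs)$i = 0 \<and> b2 xs xs $ i = 0" if "i \<in> I" for i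
    proof -
      have "a$i + (P *v xs)$i + b2 xs xs $ i = 0" using z that gxs by simp
      moreover have "0 \<le> a$i" "0 \<le> (P *v xs)$i" "0 \<le> b2 xs xs $ i"
        using a Pxs b2xs by (auto simp: less_eq_vec_def)
      ultimately show ?thesis by linarith
    qed
    have PI: "P$i$j = 0" if "i \<in> I" for i j
    proof -
      have "(\<Sum>j\<in>UNIV. P$i$j * xs$j) = 0" using aI[OF that] by (simp add: matrix_vector_mult_def)
      moreover have "\<forall>j. 0 \<le> P$i$j * xs$j" using P xs(1) by (auto simp: less_eq_vec_def)
      ultimately have "P$i$j * xs$j = 0" by (simp add: sum_nonneg_eq_0_iff)
      then show ?thesis using xs(4)[of j] by simp
    qed
    have NI: "N$i$j = 0 \<and> b1 (axis j 1) xs $ i = 0" if "i \<in> I" "j \<notin> I" for i j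
    proof -
      have "i \<noteq> j" using that by auto
      then have "N$i$j \<le> 0" by (rule NZ)
      moreover have "0 \<le> b1 (axis j 1) xs $ i" by (rule b1e[OF xs(1)])
      moreover have "J xs $i$j = 0" using cl that by blast
      ultimately show ?thesis using Jent[of xs i j] by linarith
    qed
    have MI: "M$i$j = 0" if "i \<in> I" "j \<notin> I" for i j
      using NI[OF that] PI[OF that(1)] Msplit by simp
    define z where "z = (\<chi> j. if j \<in> I then 0 else xs$j)"
    have z0: "0 \<le> z" "z \<le> xs" using xs(1) by (auto simp: z_def less_eq_vec_def)
    have super: "a + b z z \<le> M *v z"
      unfolding less_eq_vec_def
    proof
      fix i
      show "(a + b z z)$i \<le> (M *v z)$i"
      proof (cases "i \<in> I")
        case True
        have Mz: "(M *v z)$i = 0" unfolding matrix_vector_mult_def z_def vec_lambda_beta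
          by (rule sum.neutral) (auto simp: MI[OF True])
        have "b2 z z \<le> b2 xs xs" by (rule bil_mono[OF b2 z0 z0])
        then have "b2 z z $ i \<le> b2 xs xs $ i" by (simp add: less_eq_vec_def)
        then have B2: "b2 z z $ i \<le> 0" using aI[OF True] by simp
        have "b1 z z \<le> b1 z xs" by (rule bil_mono[OF b1 z0(1) order_refl z0])
        moreover have "b1 z xs $ i = 0"
        proof -
          have "b1 z xs $ i = (matrix (\<lambda>y. b1 y xs) *v z) $ i" using bil_matrix[OF b1(1)] by simp
          also have "\<dots> = 0" unfolding matrix_vector_mult_def bil_ent z_def vec_lambda_beta
            by (rule sum.neutral) (auto simp: NI[OF True])
          finally show ?thesis .
        qed
        ultimately have B1: "b1 z z $ i \<le> 0" by (metis less_eq_vec_def)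
        show ?thesis using Mz B1 B2 aI[OF True] bsplit by simp
      next
        case False
        have "(M *v xs)$i - (M *v z)$i = (M *v (xs - z))$i" by (simp add: matrix_vector_mult_diff_distrib)
        also have "\<dots> \<le> 0" unfolding matrix_vector_mult_def vec_lambda_beta
        proof (rule sum_nonpos)
          fix j
          show "M$i$j * (xs - z)$j \<le> 0"
          proof (cases "j \<in> I")
            case True
            then have "i \<noteq> j" using False by auto
            then show ?thesis using MZ[of i j] xs(4)[of j] True
              by (simp add: z_def mult_nonpos_nonneg)
          next
            case False then show ?thesis by (simp add: z_def)
          qed
        qed
        finally have "(M *v xs)$i \<le> (M *v z)$i" by simp
        moreover have "b z z \<le> b xs xs" by (rule bil_mono[OF b z0 z0])
        then have "b z z $ i \<le> b xs xs $ i" by (simp add: less_eq_vec_def)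
        ultimately show ?thesis using xs(2) by simp
      qed
    qed
    obtain w where w: "is_sol M a b w" "w \<le> z"
      using supersol[OF Mmono M(2) a b z0(1) super] by blast
    have "xs \<le> w" by (rule xs(3)[OF w(1)])
    from Ine obtain i where iI: "i \<in> I" by auto
    have "xs$i \<le> z$i" using \<open>xs \<le> w\<close> w(2) by (auto simp: less_eq_vec_def intro: order_trans)
    then show False using iI xs(4)[of i] by (simp add: z_def)
  qed

  have Jxinv: "invertible (J xs)" by (rule mono_inv) (rule Jxmono)
  define v1 where "v1 = matrix_inv (J xs) *v vec 1"
  have Jv1: "J xs *v v1 = vec 1" using inv_props(3)[OF Jxinv] v1_def by simp
  have "0 \<le> J xs *v v1" unfolding Jv1 by (simp add: less_eq_vec_def)
  then have v1nn: "0 \<le> v1" by (rule Jxmono)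
  have v1pos: "0 < v1$i" for i
  proof (rule ccontr)
    assume "\<not> 0 < v1$i"
    then have vi: "v1$i = 0" using v1nn by (metis less_eq_vec_def order_le_less zero_index)
    have "(J xs *v v1)$i \<le> 0" unfolding matrix_vector_mult_def vec_lambda_beta
    proof (rule sum_nonpos)
      fix j show "J xs $i$j * v1$j \<le> 0"
      proof (cases "j = i")
        case True then show ?thesis using vi by simp
      next
        case False then show ?thesis using JZ[OF xs(1), of i j] v1nn
          by (simp add: less_eq_vec_def mult_nonpos_nonneg)
      qed
    qed
    then show False using Jv1 by simp
  qed
  have Jmono: "0 \<le> v" if y: "0 \<le> y" "y \<le> xs" and Jyv: "0 \<le> J y *v v" for y v
  proof -
    have Jyv1: "1 \<le> (J y *v v1)$i" for i
    proof -
      have "J y *v v1 = J xs *v v1 + b1 v1 (xs - y)" using JJ[where y=y and y'=xs and v=v1] b1(1)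
        by (simp add: bilinear_rsub algebra_simps)
      moreover have "0 \<le> b1 v1 (xs - y)" using b1(2) v1nn y(2) by (simp add: less_eq_vec_def)
      ultimately show ?thesis using Jv1 by (simp add: less_eq_vec_def)
    qed
    show ?thesis
    proof (rule Zmono[where v = v1 and A = "J y"])
      show "\<And>i j. i \<noteq> j \<Longrightarrow> J y$i$j \<le> 0" using JZ[OF y(1)] by blast
      show "\<And>i. 0 < v1$i" by (rule v1pos)
      show "0 \<le> J y *v v1" using Jyv1 by (auto simp: less_eq_vec_def intro: order_trans[OF zero_le_one])
      show "0 \<le> J y *v v" by (rule Jyv)
      fix I assume "I \<noteq> {}" "\<forall>i\<in>I. (J y *v v1)$i = 0"
      then show False using Jyv1 by (metis all_not_in_conv not_one_le_zero)
    qed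
  qed
  have Jinv: "invertible (J y)" if "0 \<le> y" "y \<le> xs" for y
    by (rule mono_inv) (rule Jmono[OF that])
  have Jle: "p \<le> q" if "0 \<le> y" "y \<le> xs" "J y *v p \<le> J y *v q" for y p q
    by (rule mono_le[of "J y"]) (use Jmono[OF that(1,2)] that(3) in auto)

  have gmono: "g u \<le> g u'" if u: "0 \<le> u" "u \<le> u'" for u u'
  proof -
    have "0 \<le> P *v (u' - u)" by (rule mv_nonneg[OF P]) (use u in \<open>simp add: less_eq_vec_def\<close>)
    then have "P *v u \<le> P *v u'" by (simp add: matrix_vector_mult_diff_distrib less_eq_vec_def)
    moreover have "b2 u u \<le> b2 u' u'" by (rule bil_mono[OF b2 u u])
    ultimately show ?thesis unfolding g_def by (simp add: less_eq_vec_def add_mono)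
  qed
  have L2: "g y \<le> J y *v xs" if y: "0 \<le> y" "y \<le> xs" for y
  proof -
    have "g y \<le> g xs" by (rule gmono[OF y])
    moreover have "J y *v xs = g xs + b1 xs (xs - y)"
      unfolding Jv Nxs g_def using b1(1) by (simp add: bilinear_rsub algebra_simps)
    moreover have "0 \<le> b1 xs (xs - y)" using b1(2) xs(1) y(2) by (simp add: less_eq_vec_def)
    ultimately show ?thesis by (simp add: less_eq_vec_def add_increasing2)
  qed
  have Fid: "Fmap M a b z = J z *v z - g z" for z
    unfolding Fmap_def Jv g_def Nsp bsplit by (simp add: algebra_simps)
  have ind: "0 \<le> x j \<and> x j \<le> xs \<and> Fmap M a b (x j) \<le> 0" for j
  proof (induction j)
    case 0 then show ?case using x0 by simp
  next
    case (Suc j)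
    then have h: "0 \<le> x j" "x j \<le> xs" "Fmap M a b (x j) \<le> 0" by auto
    have e: "J (x j) *v x (Suc j) = g (x j)" using iter[of j] inv_props(3)[OF Jinv[OF h(1,2)]] by simp
    have "J (x j) *v x j \<le> J (x j) *v x (Suc j)"
      using h(3) unfolding e Fid by (simp add: less_eq_vec_def)
    then have s1: "x j \<le> x (Suc j)" by (rule Jle[OF h(1,2)])
    have "J (x j) *v x (Suc j) \<le> J (x j) *v xs" unfolding e by (rule L2[OF h(1,2)])
    then have s2: "x (Suc j) \<le> xs" by (rule Jle[OF h(1,2)])
    have s0: "0 \<le> x (Suc j)" using h(1) s1 by (rule order_trans)
    have "J (x (Suc j)) *v x (Suc j) = g (x j) - b1 (x (Suc j)) (x (Suc j) - x j)"
      using JJ[where y="x (Suc j)" and y'="x j" and v="x (Suc j)"] e by simp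
    moreover have "0 \<le> b1 (x (Suc j)) (x (Suc j) - x j)" using b1(2) s0 s1 by (simp add: less_eq_vec_def)
    moreover have "g (x j) \<le> g (x (Suc j))" by (rule gmono[OF h(1) s1])
    ultimately have "J (x (Suc j)) *v x (Suc j) \<le> g (x (Suc j))"
      by (simp add: less_eq_vec_def) (smt (verit))
    then have "Fmap M a b (x (Suc j)) \<le> 0" unfolding Fid by (simp add: less_eq_vec_def)
    then show ?case using s0 s2 by simp
  qed

  have xk: "0 \<le> x k" "x (Suc k) \<le> xs" using ind[of k] ind[of "Suc k"] by auto
  have yk0: "0 \<le> yk" using xk(1) yk(1) by (rule order_trans)
  have xk1: "0 \<le> x (Suc k)" using yk0 yk(2) by (rule order_trans)
  have ykxs: "yk \<le> xs" using yk(2) xk(2) by (rule order_trans)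
  have xkxs: "x k \<le> xs" using ind[of k] by auto
  have invJ: "invertible (J yk)" by (rule Jinv[OF yk0 ykxs])
  define w where "w = matrix_inv (J yk) *v gk"
  have Jw: "J yk *v w = gk" using inv_props(3)[OF invJ] w_def by simp
  have e: "J (x k) *v x (Suc k) = g (x k)" using iter[of k] inv_props(3)[OF Jinv[OF xk(1) xkxs]] by simp
  have "J yk *v x (Suc k) \<le> J yk *v w"
  proof -
    have "J yk *v x (Suc k) = g (x k) - b1 (x (Suc k)) (yk - x k)"
      using JJ[where y=yk and y'="x k" and v="x (Suc k)"] e by simp
    moreover have "0 \<le> b1 (x (Suc k)) (yk - x k)" using b1(2) xk1 yk(1) by (simp add: less_eq_vec_def)
    ultimately show ?thesis unfolding Jw using gk(1)
      by (simp add: less_eq_vec_def) (smt (verit))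
  qed
  then have c1: "x (Suc k) \<le> w" by (rule Jle[OF yk0 ykxs])
  have "J yk *v w \<le> J yk *v xs"
  proof -
    have "g (x (Suc k)) \<le> J (x (Suc k)) *v xs" by (rule L2[OF xk1 xk(2)])
    moreover have "J (x (Suc k)) *v xs = J yk *v xs - b1 xs (x (Suc k) - yk)"
      using JJ[where y="x (Suc k)" and y'=yk and v=xs] by simp
    moreover have "0 \<le> b1 xs (x (Suc k) - yk)" using b1(2) xs(1) yk(2) by (simp add: less_eq_vec_def)
    ultimately show ?thesis unfolding Jw using gk(2)
      by (simp add: less_eq_vec_def) (smt (verit))
  qed
  then have c2: "w \<le> xs" by (rule Jle[OF yk0 ykxs])
  show ?thesis using invJ c1 c2 unfolding w_def by blast
qed
end
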